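(* Let $0<q<1/2$, $p=1-q$ and $z\ge1$ an integer. Define $$P(z)=1-\sum_{k=0}^{z-1}\left(p^zq^k-q^zp^k\right)\binom{k+z-1}{k},\qquad P_{SN}(z)=1-\sum_{k=0}^{z-1}e^{-zq/p}\frac{(zq/p)^k}{k!}\left(1-\left(\frac qp\right)^{z-k}\right),$$ and for $\kappa>0$ $$P(z,\kappa)=1-\sum_{k=0}^{z-1}\left(1-\left(\frac qp\right)^{z-k}\right)\frac{\mu^k}{k!}e^{-\mu},\qquad \mu=\kappa z\frac qp.$$ Then $P_{SN}(z)=P(z,1)$ and $$P(z)=\int_0^{+\infty}P(z,\kappa)\,d\rho_z(\kappa),\qquad d\rho_z(\kappa)=\frac{z^z}{(z-1)!}\kappa^{z-1}e^{-z\kappa}\,d\kappa.$$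
   Context: $P(z)$ is the exact probability of success of a double-spend attack (attacker relative hash power $q$, honest $p$) after $z$ confirmations; $P_{SN}(z)$ is Nakamoto's approximation of it; $P(z,\kappa)$ is the success probability conditional on the $z$ honest blocks having taken $\kappa$ times their expected total time. *)

theory Defs
  imports "HOL-Analysis.Analysis"
begin

text \<open>Exact double-spend success probability after z confirmations.\<close>
definition P_exact :: "real \<Rightarrow> nat \<Rightarrow> real" where
  "P_exact q z = (let p = 1 - q in
     1 - (\<Sum>k<z. (p ^ z * q ^ k - q ^ z * p ^ k) * real ((k + z - 1) choose k)))"

text \<open>Nakamoto's approximation.\<close>
definition P_SN :: "real \<Rightarrow> nat \<Rightarrow> real" where
  "P_SN q z = (let p = 1 - q in
     1 - (\<Sum>k<z. exp (- (real z * q / p)) * (real z * q / p) ^ k / fact k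
                   * (1 - (q / p) ^ (z - k))))"

definition P_kappa :: "real \<Rightarrow> nat \<Rightarrow> real \<Rightarrow> real" where
  "P_kappa q z \<kappa> = (let p = 1 - q; \<mu> = \<kappa> * real z * q / p in
     1 - (\<Sum>k<z. (1 - (q / p) ^ (z - k)) * \<mu> ^ k / fact k * exp (- \<mu>)))"

definition rho_dens :: "nat \<Rightarrow> real \<Rightarrow> real" where
  "rho_dens z \<kappa> = real z ^ z / fact (z - 1) * \<kappa> ^ (z - 1) * exp (- real z * \<kappa>)"

end

theory Submission imports Defs "HOL-Probability.Probability" begin

lemma gamma_int:
  fixes l :: real and k :: nat
  assumes l: "0 < l"
  shows "((\<lambda>x. x ^ k * exp (- l * x)) has_integral fact k / l ^ Suc k) {0<..}"
proof -
  have "(erlang_density k l has_integral 1) UNIV"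
    using nn_integral_erlang_ith_moment[OF l, of k 0]
    by (intro nn_integral_has_integral) (auto simp: l less_imp_le)
  then have "((\<lambda>x. l ^ Suc k / fact k * (x ^ k * exp (- l * x))) has_integral 1) {0<..}"
    apply (subst has_integral_restrict_UNIV[symmetric])
    apply (rule has_integral_spike_finite[of "{0}", rotated 2], assumption)
    by (auto simp: erlang_density_def)
  then have "((\<lambda>x. (fact k / l ^ Suc k) * (l ^ Suc k / fact k * (x ^ k * exp (- l * x)))) has_integral (fact k / l ^ Suc k) * 1) {0<..}"
    by (rule has_integral_mult_right)
  then show ?thesis using l by simp
qed

lemma alg_aux:
  fixes a r p Z F1 F2 C :: real
  assumes "F1 > 0" "F2 > 0" "Z > 0" "p > 0"
  shows "(a * (Z*r)^k / F1 * (Z^z / F2)) * (F1*F2*C / (Z/p)^(z+k)) = a * (r^k * p^(z+k)) * C"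
  using assms by (simp add: power_add power_mult_distrib power_divide field_simps)

theorem mainTheorem6:
  fixes q :: real and z :: nat
  assumes "0 < q" and "q < 1/2" and "1 \<le> z"
  shows "P_SN q z = P_kappa q z 1
    \<and> ((\<lambda>\<kappa>. P_kappa q z \<kappa> * rho_dens z \<kappa>) has_integral P_exact q z) {0<..}"
proof
  define p where "p = 1 - q"
  have p: "0 < p" using assms by (simp add: p_def)
  show "P_SN q z = P_kappa q z 1"
    unfolding P_SN_def P_kappa_def Let_def
    by (intro arg_cong[where f="\<lambda>x. 1 - x"] sum.cong) auto
  define r where "r = q / p"
  define L where "L = real z / p"
  have L: "0 < L" using p assms by (simp add: L_def)
  define A where "A k = (1 - r ^ (z - k)) * (real z * r) ^ k / fact k * (real z ^ z / fact (z - 1))" for k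
  have pw: "P_kappa q z \<kappa> * rho_dens z \<kappa> = rho_dens z \<kappa> - (\<Sum>k<z. A k * (\<kappa> ^ (z - 1 + k) * exp (- L * \<kappa>)))" for \<kappa>
  proof -
    have e: "exp (- (\<kappa> * real z * r)) * exp (- real z * \<kappa>) = exp (- L * \<kappa>)"
      unfolding exp_add[symmetric] using p by (simp add: L_def r_def p_def field_simps)
    have "P_kappa q z \<kappa> * rho_dens z \<kappa> = rho_dens z \<kappa> - (\<Sum>k<z. (1 - r ^ (z - k)) * (\<kappa> * real z * r) ^ k / fact k * exp (- (\<kappa> * real z * r)) * rho_dens z \<kappa>)"
      unfolding P_kappa_def Let_def r_def p_def left_diff_distrib mult_1 sum_distrib_right
      by (intro arg_cong[where f="\<lambda>x. rho_dens z \<kappa> - x"] sum.cong refl) (simp add: mult_ac)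
    also have "\<dots> = rho_dens z \<kappa> - (\<Sum>k<z. A k * (\<kappa> ^ (z - 1 + k) * exp (- L * \<kappa>)))"
    proof (intro arg_cong[where f="\<lambda>x. rho_dens z \<kappa> - x"] sum.cong refl)
      fix k assume "k \<in> {..<z}"
      show "(1 - r ^ (z - k)) * (\<kappa> * real z * r) ^ k / fact k * exp (- (\<kappa> * real z * r)) * rho_dens z \<kappa> = A k * (\<kappa> ^ (z - 1 + k) * exp (- L * \<kappa>))"
        unfolding A_def rho_dens_def e[symmetric] by (simp add: power_add power_mult_distrib field_simps)
    qed
    finally show ?thesis .
  qed
  have I1: "(rho_dens z has_integral 1) {0<..}"
  proof -
    have "((\<lambda>x. (real z ^ z / fact (z - 1)) * (x ^ (z - 1) * exp (- real z * x))) has_integral (real z ^ z / fact (z - 1)) * (fact (z - 1) / real z ^ Suc (z - 1))) {0<..}"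
      by (rule has_integral_mult_right, rule gamma_int) (use assms in simp)
    then show ?thesis using assms unfolding rho_dens_def by (simp add: mult.assoc)
  qed
  have I2: "((\<lambda>\<kappa>. \<Sum>k<z. A k * (\<kappa> ^ (z - 1 + k) * exp (- L * \<kappa>))) has_integral (\<Sum>k<z. A k * (fact (z - 1 + k) / L ^ Suc (z - 1 + k)))) {0<..}"
    by (intro has_integral_sum finite_lessThan has_integral_mult_right gamma_int L)
  have eq: "1 - (\<Sum>k<z. A k * (fact (z - 1 + k) / L ^ Suc (z - 1 + k))) = P_exact q z"
    unfolding P_exact_def Let_def p_def[symmetric]
  proof (intro arg_cong[where f="\<lambda>x. 1 - x"] sum.cong refl)
    fix k assume k: "k \<in> {..<z}"
    have f: "fact (z - 1 + k) = fact k * fact (z - 1) * real ((k + z - 1) choose k)"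
    proof -
      have "fact k * fact (k + z - 1 - k) * ((k + z - 1) choose k) = (fact (k + z - 1) :: nat)"
        by (rule binomial_fact_lemma) (use assms in simp)
      then have "real (fact k * fact (z - 1) * ((k + z - 1) choose k)) = real (fact (z - 1 + k))"
        using assms by (simp add: add.commute)
      then show ?thesis by (simp only: of_nat_mult of_nat_fact)
    qed
    have s: "Suc (z - 1 + k) = z + k" using assms by simp
    have rk: "r ^ (z - k) * r ^ k = r ^ z" using k by (simp add: power_add[symmetric])
    show "A k * (fact (z - 1 + k) / L ^ Suc (z - 1 + k)) = (p ^ z * q ^ k - q ^ z * p ^ k) * real ((k + z - 1) choose k)"
    proof -
      have zp: "real z ^ (z + k) > 0" using assms by simp
      have "A k * (fact k * fact (z - 1) * real ((k + z - 1) choose k) / L ^ (z + k))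
          = (1 - r ^ (z - k)) * (r ^ k * p ^ (z + k)) * real ((k + z - 1) choose k)"
        unfolding A_def L_def using assms p
        by (intro alg_aux) auto
      also have "\<dots> = (r ^ k * p ^ (z + k) - (r ^ (z - k) * r ^ k) * p ^ (z + k)) * real ((k + z - 1) choose k)"
        by (simp add: algebra_simps)
      also have "\<dots> = (p ^ z * q ^ k - q ^ z * p ^ k) * real ((k + z - 1) choose k)"
      proof -
        have a: "q ^ k * q ^ (z - k) = q ^ z" "p ^ k * p ^ (z - k) = p ^ z"
          using k by (simp_all add: power_add[symmetric])
        show ?thesis
          unfolding rk r_def using p a by (simp add: power_add power_divide field_simps)
      qed
      finally show ?thesis unfolding s f .
    qed
  qed
  show "((\<lambda>\<kappa>. P_kappa q z \<kappa> * rho_dens z \<kappa>) has_integral P_exact q z) {0<..}"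
    unfolding pw eq[symmetric] by (rule has_integral_diff[OF I1 I2])
qed

end
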